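(* Let $k\in\mathbb{N}$ and $(A,B,C)\in\mathsf{TCP}_d^k$. Then $M_{k-1}(B)$ and $M_{k-1}(C)$ are positive semidefinite.
   Context: For $v\in\mathbb{C}^d$, $\sigma(v)$ is the number of nonzero coordinates; $\odot$ is the entrywise product and $\bar v$ the entrywise conjugate. A triple $(A,B,C)$ of $d\times d$ complex matrices with equal diagonals lies in $\mathsf{TCP}_d^k$ if there are finitely many vectors $v_n,w_n\in\mathbb{C}^d$ with $\sigma(v_n\odot w_n)\le k$ for all $n$ and $A=\sum_n|v_n\odot\bar v_n\rangle\langle w_n\odot\bar w_n|$, $B=\sum_n|v_n\odot w_n\rangle\langle v_n\odot w_n|$, $C=\sum_n|v_n\odot\bar w_n\rangle\langle v_n\odot\bar w_n|$. For $X\in\mathcal{M}_d(\mathbb{C})$ and $m\ge0$, $M_m(X)$ has entries $M_m(X)_{ii}=m|X_{ii}|$ and $M_m(X)_{ij}=-|X_{ij}|$ for $i\ne j$. *)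

theory Defs
  imports "HOL-Analysis.Analysis" "HOL-Library.Complex_Order"
begin

text \<open>Vectors in C^d are \<open>complex ^ 'd\<close>, d x d matrices are \<open>complex ^ 'd ^ 'd\<close>
  (d = CARD('d), an arbitrary finite index type).\<close>

definition supp_size :: "complex ^ 'd \<Rightarrow> nat" where
  "supp_size v = card {i. v $ i \<noteq> 0}"

definition hadamard :: "complex ^ 'd \<Rightarrow> complex ^ 'd \<Rightarrow> complex ^ 'd" where
  "hadamard v w = (\<chi> i. v $ i * w $ i)"

definition vconj :: "complex ^ 'd \<Rightarrow> complex ^ 'd" where
  "vconj v = (\<chi> i. cnj (v $ i))"

definition ketbra :: "complex ^ 'd \<Rightarrow> complex ^ 'd \<Rightarrow> complex ^ 'd ^ 'd" where
  "ketbra u x = (\<chi> i j. u $ i * cnj (x $ j))"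

definition TCP :: "nat \<Rightarrow> (complex ^ 'd ^ 'd) \<times> (complex ^ 'd ^ 'd) \<times> (complex ^ 'd ^ 'd) \<Rightarrow> bool" where
  "TCP k ABC = (case ABC of (A, B, C) \<Rightarrow>
     (\<forall>i. A $ i $ i = B $ i $ i \<and> B $ i $ i = C $ i $ i) \<and>
     (\<exists>vws :: ((complex ^ 'd) \<times> (complex ^ 'd)) list.
        (\<forall>(v, w) \<in> set vws. supp_size (hadamard v w) \<le> k) \<and>
        A = sum_list (map (\<lambda>(v, w). ketbra (hadamard v (vconj v)) (hadamard w (vconj w))) vws) \<and>
        B = sum_list (map (\<lambda>(v, w). ketbra (hadamard v w) (hadamard v w)) vws) \<and>
        C = sum_list (map (\<lambda>(v, w). ketbra (hadamard v (vconj w)) (hadamard v (vconj w))) vws)))"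

definition Mmat :: "real \<Rightarrow> complex ^ 'd ^ 'd \<Rightarrow> complex ^ 'd ^ 'd" where
  "Mmat m X = (\<chi> i j. if i = j then complex_of_real (m * cmod (X $ i $ i))
                        else - complex_of_real (cmod (X $ i $ j)))"

text \<open>Positive semidefinite: x^* X x is a nonnegative real for all x
  (complex order from Complex_Order: 0 \<le> z iff z is real and nonnegative).\<close>
definition psd :: "complex ^ 'd ^ 'd \<Rightarrow> bool" where
  "psd X = (\<forall>x :: complex ^ 'd. 0 \<le> (\<Sum>i\<in>UNIV. \<Sum>j\<in>UNIV. cnj (x $ i) * X $ i $ j * x $ j))"

end

theory Submission
  imports Defs
begin

lemma entry: "(\<Sum>n\<in>I. ketbra (u n) (u n)) $ i $ j = (\<Sum>n\<in>I. u n $ i * cnj (u n $ j))"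
  by (simp add: ketbra_def sum_component)

lemma cs_bound:
  fixes a :: "'d::finite \<Rightarrow> real"
  assumes "card {i. a i \<noteq> 0} \<le> k"
  shows "(\<Sum>i\<in>UNIV. a i)^2 \<le> real k * (\<Sum>i\<in>UNIV. (a i)^2)"
proof -
  let ?S = "{i. a i \<noteq> 0}"
  have "(\<Sum>i\<in>UNIV. a i) = (\<Sum>i\<in>?S. a i)" by (rule sum.mono_neutral_right) auto
  moreover have "(\<Sum>i\<in>UNIV. (a i)^2) = (\<Sum>i\<in>?S. (a i)^2)" by (rule sum.mono_neutral_right) auto
  moreover have "(\<Sum>i\<in>?S. a i)^2 \<le> (\<Sum>i\<in>?S. (a i)^2) * card ?S"
    by (rule sum_squared_le_sum_of_squares)
  moreover have "(\<Sum>i\<in>?S. (a i)^2) * card ?S \<le> (\<Sum>i\<in>?S. (a i)^2) * k"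
    using assms by (intro mult_left_mono) (auto intro: sum_nonneg)
  ultimately show ?thesis by (simp add: mult.commute)
qed

lemma main:
  fixes u :: "nat \<Rightarrow> complex ^ 'd"
  assumes supp: "\<And>n. n \<in> I \<Longrightarrow> supp_size (u n) \<le> k" and fin: "finite I"
  shows "psd (Mmat (real k - 1) (\<Sum>n\<in>I. ketbra (u n) (u n)))"
  unfolding psd_def
proof
  fix x :: "complex ^ 'd"
  define B where "B = (\<Sum>n\<in>I. ketbra (u n) (u n))"
  define c where "c i j = cmod (B $ i $ j)" for i j
  define d where "d i = (\<Sum>n\<in>I. (cmod (u n $ i))^2)" for i
  have Bij: "B $ i $ j = (\<Sum>n\<in>I. u n $ i * cnj (u n $ j))" for i j
    unfolding B_def by (rule entry)
  have Bii: "B $ i $ i = complex_of_real (d i)" for i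
    unfolding Bij d_def of_real_sum by (intro sum.cong refl) (metis complex_norm_square of_real_power)
  have cii: "c i i = d i" for i
    proof - have "d i \<ge> 0" unfolding d_def by (simp add: sum_nonneg) thus ?thesis unfolding c_def Bii by simp qed
  have csym: "c j i = c i j" for i j
  proof -
    have "B $ j $ i = cnj (B $ i $ j)" unfolding Bij by (simp add: mult.commute)
    thus ?thesis unfolding c_def by simp
  qed
  have cle: "c i j \<le> (\<Sum>n\<in>I. cmod (u n $ i) * cmod (u n $ j))" for i j
    unfolding c_def Bij by (rule order_trans[OF norm_sum]) (simp add: norm_mult)
  have Mij: "Mmat (real k - 1) B $ i $ j = complex_of_real ((if i = j then real k * d i else 0) - c i j)" for i j
    by (auto simp: Mmat_def c_def cii[unfolded c_def] algebra_simps)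
  define Q where "Q = (\<Sum>i\<in>UNIV. \<Sum>j\<in>UNIV. cnj (x $ i) * Mmat (real k - 1) B $ i $ j * x $ j)"
  have Qeq: "Q = complex_of_real (real k * (\<Sum>i\<in>UNIV. d i * (cmod (x $ i))^2))
      - (\<Sum>i\<in>UNIV. \<Sum>j\<in>UNIV. complex_of_real (c i j) * (cnj (x $ i) * x $ j))"
  proof -
    have "Q = (\<Sum>i\<in>UNIV. \<Sum>j\<in>UNIV. complex_of_real (if i = j then real k * d i else 0) * (cnj (x $ i) * x $ j)
       - complex_of_real (c i j) * (cnj (x $ i) * x $ j))"
      unfolding Q_def Mij by (intro sum.cong refl) (simp add: algebra_simps)
    also have "\<dots> = (\<Sum>i\<in>UNIV. complex_of_real (real k * d i) * (cnj (x $ i) * x $ i))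
       - (\<Sum>i\<in>UNIV. \<Sum>j\<in>UNIV. complex_of_real (c i j) * (cnj (x $ i) * x $ j))"
    proof -
      have "(\<Sum>j\<in>UNIV. complex_of_real (if i = j then real k * d i else 0) * (cnj (x $ i) * x $ j))
          = complex_of_real (real k * d i) * (cnj (x $ i) * x $ i)" for i
      proof -
        have "(\<Sum>j\<in>UNIV. complex_of_real (if i = j then real k * d i else 0) * (cnj (x $ i) * x $ j))
          = (\<Sum>j\<in>UNIV. if i = j then complex_of_real (real k * d i) * (cnj (x $ i) * x $ j) else 0)"
          by (intro sum.cong) auto
        thus ?thesis by simp
      qed
      thus ?thesis by (simp add: sum_subtractf)
    qed
    also have "(\<Sum>i\<in>UNIV. complex_of_real (real k * d i) * (cnj (x $ i) * x $ i))
        = complex_of_real (real k * (\<Sum>i\<in>UNIV. d i * (cmod (x $ i))^2))"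
    proof -
      have nx: "cnj (x $ i) * x $ i = complex_of_real ((cmod (x $ i))^2)" for i
        by (simp only: complex_norm_square mult.commute)
      show ?thesis unfolding nx of_real_mult[symmetric] of_real_sum[symmetric]
        by (simp add: sum_distrib_left mult.assoc)
    qed
    finally show ?thesis .
  qed
  define S where "S = (\<Sum>i\<in>UNIV. \<Sum>j\<in>UNIV. complex_of_real (c i j) * (cnj (x $ i) * x $ j))"
  have ImS: "Im S = 0"
  proof -
    define T where "T = (\<Sum>i\<in>UNIV. \<Sum>j\<in>UNIV. c i j * Im (cnj (x $ i) * x $ j))"
    have IT: "Im S = T"
      unfolding S_def T_def by (simp add: Im_sum)
    have "T = (\<Sum>i\<in>UNIV. \<Sum>j\<in>UNIV. c j i * Im (cnj (x $ j) * x $ i))"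
      unfolding T_def by (rule sum.swap)
    also have "\<dots> = - T"
      unfolding T_def by (simp add: csym sum_negf[symmetric] algebra_simps)
    finally have "T = - T" .
    thus ?thesis using IT by simp
  qed
  define a where "a n i = cmod (u n $ i) * cmod (x $ i)" for n i
  have "Re S = (\<Sum>i\<in>UNIV. \<Sum>j\<in>UNIV. c i j * Re (cnj (x $ i) * x $ j))"
    unfolding S_def by (simp add: Re_sum)
  also have "\<dots> \<le> (\<Sum>i\<in>UNIV. \<Sum>j\<in>UNIV. c i j * (cmod (x $ i) * cmod (x $ j)))"
  proof (intro sum_mono mult_left_mono)
    fix i j
    show "Re (cnj (x $ i) * x $ j) \<le> cmod (x $ i) * cmod (x $ j)"
      using complex_Re_le_cmod[of "cnj (x $ i) * x $ j"] by (simp add: norm_mult)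
    show "0 \<le> c i j" by (simp add: c_def)
  qed
  also have "\<dots> \<le> (\<Sum>i\<in>UNIV. \<Sum>j\<in>UNIV. (\<Sum>n\<in>I. cmod (u n $ i) * cmod (u n $ j)) * (cmod (x $ i) * cmod (x $ j)))"
    by (intro sum_mono mult_right_mono cle) simp
  also have "\<dots> = (\<Sum>n\<in>I. (\<Sum>i\<in>UNIV. a n i) * (\<Sum>j\<in>UNIV. a n j))"
    by (simp add: a_def sum_distrib_left sum_distrib_right sum.swap[of _ I] algebra_simps)
  also have "\<dots> \<le> (\<Sum>n\<in>I. real k * (\<Sum>i\<in>UNIV. (a n i)^2))"
  proof (rule sum_mono)
    fix n assume nI: "n \<in> I"
    have "{i. a n i \<noteq> 0} \<subseteq> {i. u n $ i \<noteq> 0}" by (auto simp: a_def)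
    hence "card {i. a n i \<noteq> 0} \<le> card {i. u n $ i \<noteq> 0}" by (intro card_mono) auto
    also have "\<dots> \<le> k" using supp[OF nI] by (simp add: supp_size_def)
    finally show "(\<Sum>i\<in>UNIV. a n i) * (\<Sum>j\<in>UNIV. a n j) \<le> real k * (\<Sum>i\<in>UNIV. (a n i)^2)"
      using cs_bound[of "a n" k] by (simp add: power2_eq_square)
  qed
  also have "\<dots> = real k * (\<Sum>i\<in>UNIV. d i * (cmod (x $ i))^2)"
    by (simp add: a_def d_def sum_distrib_left sum_distrib_right sum.swap[of _ I] power_mult_distrib algebra_simps)
  finally have ReS: "Re S \<le> real k * (\<Sum>i\<in>UNIV. d i * (cmod (x $ i))^2)" .
  have "Q = complex_of_real (real k * (\<Sum>i\<in>UNIV. d i * (cmod (x $ i))^2)) - S"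
    using Qeq S_def by simp
  hence "0 \<le> Q" using ImS ReS by (simp add: less_eq_complex_def)
  thus "0 \<le> (\<Sum>i\<in>UNIV. \<Sum>j\<in>UNIV. cnj (x $ i) * Mmat (real k - 1) (\<Sum>n\<in>I. ketbra (u n) (u n)) $ i $ j * x $ j)"
    unfolding Q_def B_def .
qed

lemma list_form:
  assumes "\<forall>p \<in> set ps. supp_size (f p) \<le> k"
  shows "psd (Mmat (real k - 1) (sum_list (map (\<lambda>p. ketbra (f p) (f p)) ps)))"
proof -
  have "sum_list (map (\<lambda>p. ketbra (f p) (f p)) ps) = (\<Sum>n\<in>{0..<length ps}. ketbra (f (ps ! n)) (f (ps ! n)))"
    by (simp add: sum_list_sum_nth)
  moreover have "psd (Mmat (real k - 1) (\<Sum>n\<in>{0..<length ps}. ketbra (f (ps ! n)) (f (ps ! n))))"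
    by (rule main) (use assms in auto)
  ultimately show ?thesis by simp
qed

theorem proposition3p12:
  fixes A B C :: "complex ^ 'd ^ 'd" and k :: nat
  assumes "TCP k (A, B, C)"
  shows "psd (Mmat (real k - 1) B) \<and> psd (Mmat (real k - 1) C)"
proof -
  obtain vws :: "((complex ^ 'd) \<times> (complex ^ 'd)) list" where
    s: "\<forall>(v, w) \<in> set vws. supp_size (hadamard v w) \<le> k" and
    B: "B = sum_list (map (\<lambda>(v, w). ketbra (hadamard v w) (hadamard v w)) vws)" and
    C: "C = sum_list (map (\<lambda>(v, w). ketbra (hadamard v (vconj w)) (hadamard v (vconj w))) vws)"
    using assms unfolding TCP_def by auto
  have eqs: "supp_size (hadamard v (vconj w)) = supp_size (hadamard v w)" for v w :: "complex ^ 'd"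
    unfolding supp_size_def hadamard_def vconj_def by simp
  have B': "B = sum_list (map (\<lambda>p. ketbra (case_prod hadamard p) (case_prod hadamard p)) vws)"
    unfolding B by (intro arg_cong[where f=sum_list] map_cong) auto
  have C': "C = sum_list (map (\<lambda>p. ketbra ((\<lambda>(v,w). hadamard v (vconj w)) p) ((\<lambda>(v,w). hadamard v (vconj w)) p)) vws)"
    unfolding C by (intro arg_cong[where f=sum_list] map_cong) auto
  show ?thesis
    unfolding B' C' using s eqs by (intro conjI list_form) auto
qed

end
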